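(* Let $k\ge 2$ and let $P$ be a finite poset excluding $\mathbf{k}+\mathbf{k}$, of height $h$. If every convex subposet $Q$ of $P$ of height at most $4k-4$ satisfies $\dim(Q)\le d_1$, then $\dim(P)\le (h+1)d_1$.
   Context: $\mathbf{k}+\mathbf{k}$ is the disjoint union of two $k$-element chains with all points of one incomparable to all points of the other; $P$ excludes it if no subposet is isomorphic to it. A subposet $Q$ is convex if $x,z\in Q$ and $x<y<z$ imply $y\in Q$. $\dim$ denotes the Dushnik–Miller dimension. *)

theory Defs
  imports Main
begin

definition poset_on :: "'a set \<Rightarrow> ('a \<Rightarrow> 'a \<Rightarrow> bool) \<Rightarrow> bool" where
  "poset_on X le \<longleftrightarrow>
     (\<forall>x\<in>X. le x x) \<and>
     (\<forall>x\<in>X. \<forall>y\<in>X. le x y \<and> le y x \<longrightarrow> x = y) \<and>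
     (\<forall>x\<in>X. \<forall>y\<in>X. \<forall>z\<in>X. le x y \<and> le y z \<longrightarrow> le x z)"

definition chain_in :: "'a set \<Rightarrow> ('a \<Rightarrow> 'a \<Rightarrow> bool) \<Rightarrow> bool" where
  "chain_in C le \<longleftrightarrow> (\<forall>x\<in>C. \<forall>y\<in>C. le x y \<or> le y x)"

definition height :: "'a set \<Rightarrow> ('a \<Rightarrow> 'a \<Rightarrow> bool) \<Rightarrow> nat" where
  "height X le = Max {card C | C. C \<subseteq> X \<and> chain_in C le}"

definition incomparable :: "('a \<Rightarrow> 'a \<Rightarrow> bool) \<Rightarrow> 'a \<Rightarrow> 'a \<Rightarrow> bool" where
  "incomparable le x y \<longleftrightarrow> \<not> le x y \<and> \<not> le y x"

definition excludes_kk :: "'a set \<Rightarrow> ('a \<Rightarrow> 'a \<Rightarrow> bool) \<Rightarrow> nat \<Rightarrow> bool" where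
  "excludes_kk X le k \<longleftrightarrow>
     \<not> (\<exists>C D. C \<subseteq> X \<and> D \<subseteq> X \<and> card C = k \<and> card D = k \<and> C \<inter> D = {} \<and>
              chain_in C le \<and> chain_in D le \<and> (\<forall>x\<in>C. \<forall>y\<in>D. incomparable le x y))"

definition convex_in :: "'a set \<Rightarrow> ('a \<Rightarrow> 'a \<Rightarrow> bool) \<Rightarrow> 'a set \<Rightarrow> bool" where
  "convex_in X le Q \<longleftrightarrow> Q \<subseteq> X \<and>
     (\<forall>x\<in>Q. \<forall>z\<in>Q. \<forall>y\<in>X. le x y \<and> le y z \<longrightarrow> y \<in> Q)"

definition linear_extension :: "'a set \<Rightarrow> ('a \<Rightarrow> 'a \<Rightarrow> bool) \<Rightarrow> ('a \<Rightarrow> 'a \<Rightarrow> bool) \<Rightarrow> bool" where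
  "linear_extension X le L \<longleftrightarrow> poset_on X L \<and> (\<forall>x\<in>X. \<forall>y\<in>X. L x y \<or> L y x) \<and>
     (\<forall>x\<in>X. \<forall>y\<in>X. le x y \<longrightarrow> L x y)"

definition realizer :: "'a set \<Rightarrow> ('a \<Rightarrow> 'a \<Rightarrow> bool) \<Rightarrow> nat \<Rightarrow> (nat \<Rightarrow> 'a \<Rightarrow> 'a \<Rightarrow> bool) \<Rightarrow> bool" where
  "realizer X le t L \<longleftrightarrow> (\<forall>i<t. linear_extension X le (L i)) \<and>
     (\<forall>x\<in>X. \<forall>y\<in>X. le x y \<longleftrightarrow> (\<forall>i<t. L i x y))"

definition dim :: "'a set \<Rightarrow> ('a \<Rightarrow> 'a \<Rightarrow> bool) \<Rightarrow> nat" where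
  "dim X le = (LEAST t. 1 \<le> t \<and> (\<exists>L. realizer X le t L))"

end

theory Submission imports Defs begin

lemma height_fin: "finite X \<Longrightarrow> finite {card C | C. C \<subseteq> X \<and> chain_in C le}"
proof -
  assume "finite X"
  have "{card C | C. C \<subseteq> X \<and> chain_in C le} \<subseteq> card ` Pow X" by auto
  thus ?thesis using \<open>finite X\<close> finite_subset by blast
qed

lemma height_ge: "finite X \<Longrightarrow> C \<subseteq> X \<Longrightarrow> chain_in C le \<Longrightarrow> card C \<le> height X le"
  unfolding height_def by (rule Max_ge[OF height_fin]) blast+

lemma height_mem: "finite X \<Longrightarrow> height X le \<in> {card C | C. C \<subseteq> X \<and> chain_in C le}"
  unfolding height_def
  proof (rule Max_in[OF height_fin])
    have "chain_in {} le" by (simp add: chain_in_def)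
    thus "{card C | C. C \<subseteq> X \<and> chain_in C le} \<noteq> {}" by blast
  qed

lemma height_ex: "finite X \<Longrightarrow> \<exists>C. C \<subseteq> X \<and> chain_in C le \<and> card C = height X le"
proof -
  assume f: "finite X"
  from height_mem[OF f] obtain C where "height X le = card C" "C \<subseteq> X" "chain_in C le" by (auto simp only: mem_Collect_eq)
  thus ?thesis by metis
qed

lemma height_le: "finite X \<Longrightarrow> (\<And>C. C \<subseteq> X \<Longrightarrow> chain_in C le \<Longrightarrow> card C \<le> n) \<Longrightarrow> height X le \<le> n"
proof -
  assume f: "finite X" and a: "\<And>C. C \<subseteq> X \<Longrightarrow> chain_in C le \<Longrightarrow> card C \<le> n"
  obtain C where C: "C \<subseteq> X" "chain_in C le" "card C = height X le" using height_ex[OF f] by blast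
  from a[OF C(1) C(2)] C(3) show ?thesis by simp
qed

lemma chain_flip: "chain_in C (\<lambda>x y. le y x) = chain_in C le"
  unfolding chain_in_def by (rule iffI; metis)

lemma height_flip: "height X (\<lambda>x y. le y x) = height X le"
  unfolding height_def chain_flip[of _ le] ..

lemma chain_sub: "chain_in C le \<Longrightarrow> D \<subseteq> C \<Longrightarrow> chain_in D le"
  unfolding chain_in_def by blast

definition rk :: "'a set \<Rightarrow> ('a \<Rightarrow> 'a \<Rightarrow> bool) \<Rightarrow> 'a \<Rightarrow> nat" where
  "rk X le x = height {z\<in>X. le z x} le"

locale fpo =
  fixes X :: "'a set" and le :: "'a \<Rightarrow> 'a \<Rightarrow> bool"
  assumes fin: "finite X" and po: "poset_on X le"
begin

lemma refl: "x\<in>X \<Longrightarrow> le x x" using po unfolding poset_on_def by blast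
lemma antisym: "x\<in>X \<Longrightarrow> y\<in>X \<Longrightarrow> le x y \<Longrightarrow> le y x \<Longrightarrow> x = y"
  using po unfolding poset_on_def by blast
lemma trans: "x\<in>X \<Longrightarrow> y\<in>X \<Longrightarrow> z\<in>X \<Longrightarrow> le x y \<Longrightarrow> le y z \<Longrightarrow> le x z"
  using po unfolding poset_on_def by blast

lemma dual: "fpo X (\<lambda>x y. le y x)"
  using fin po unfolding fpo_def poset_on_def by blast

lemma chain_max: "finite C \<Longrightarrow> C \<noteq> {} \<Longrightarrow> C \<subseteq> X \<Longrightarrow> chain_in C le \<Longrightarrow> \<exists>z\<in>C. \<forall>w\<in>C. le w z"
proof (induction C rule: finite_ne_induct)
  case (singleton x) thus ?case using refl by auto
next
  case (insert x F)
  then obtain z where z: "z\<in>F" "\<forall>w\<in>F. le w z" using chain_sub[of "insert x F" le F] by auto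
  have xz: "le x z \<or> le z x" using insert.prems z(1) unfolding chain_in_def by auto
  show ?case
  proof (cases "le z x")
    case True
    have "\<forall>w\<in>insert x F. le w x"
    proof
      fix w assume w: "w \<in> insert x F"
      show "le w x"
      proof (cases "w = x")
        case True thus ?thesis using refl insert.prems by auto
      next
        case False
        hence "w \<in> F" using w by simp
        thus ?thesis using trans[of w z x] z \<open>le z x\<close> insert.prems by auto
      qed
    qed
    thus ?thesis by blast
  next
    case False
    thus ?thesis using xz z by blast
  qed
qed

abbreviation "r \<equiv> rk X le"

lemma r_chain: "C \<subseteq> X \<Longrightarrow> chain_in C le \<Longrightarrow> \<forall>w\<in>C. le w x \<Longrightarrow> card C \<le> r x"
  unfolding rk_def by (rule height_ge) (use fin in auto)

lemma r_ex: "\<exists>C. C \<subseteq> X \<and> chain_in C le \<and> (\<forall>w\<in>C. le w x) \<and> card C = r x"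
  unfolding rk_def using height_ex[of "{z\<in>X. le z x}" le] fin by auto

lemma r_pos: "x\<in>X \<Longrightarrow> 1 \<le> r x"
  using r_chain[of "{x}" x] refl by (auto simp: chain_in_def)

lemma r_le_h: "r x \<le> height X le"
  using r_ex[of x] height_ge[OF fin] by metis

lemma r_strict: "x\<in>X \<Longrightarrow> y\<in>X \<Longrightarrow> le x y \<Longrightarrow> x \<noteq> y \<Longrightarrow> r x < r y"
proof -
  assume a: "x\<in>X" "y\<in>X" "le x y" "x \<noteq> y"
  obtain C where C: "C \<subseteq> X" "chain_in C le" "\<forall>w\<in>C. le w x" "card C = r x" using r_ex by blast
  have yC: "y \<notin> C"
  proof
    assume "y \<in> C" hence "le y x" using C by auto
    thus False using antisym[of x y] a by auto
  qed
  have wy: "\<forall>w\<in>C. le w y"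
  proof
    fix w assume "w \<in> C" thus "le w y" using trans[of w x y] C a by auto
  qed
  have "chain_in (insert y C) le" using C(2) wy refl a unfolding chain_in_def by auto
  moreover have "\<forall>w\<in>insert y C. le w y" using wy refl a by auto
  ultimately have "card (insert y C) \<le> r y" using r_chain C a by auto
  moreover have "card (insert y C) = Suc (card C)" using yC finite_subset[OF C(1) fin] by simp
  ultimately show ?thesis using C by auto
qed

lemma r_mono: "x\<in>X \<Longrightarrow> y\<in>X \<Longrightarrow> le x y \<Longrightarrow> r x \<le> r y"
proof (cases "x = y")
  case True thus ?thesis by simp
next
  case False
  assume "x\<in>X" "y\<in>X" "le x y"
  thus ?thesis using r_strict[of x y] False by simp
qed

lemma r_step: "x\<in>X \<Longrightarrow> 2 \<le> r x \<Longrightarrow> \<exists>z\<in>X. le z x \<and> z \<noteq> x \<and> r z + 1 = r x"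
proof -
  assume a: "x\<in>X" "2 \<le> r x"
  obtain C where C: "C \<subseteq> X" "chain_in C le" "\<forall>w\<in>C. le w x" "card C = r x" using r_ex by blast
  have fC: "finite C" using C fin finite_subset by blast
  let ?C = "C - {x}"
  have cc: "card ?C \<ge> r x - 1" using C fC by (simp add: card_Diff_singleton_if)
  hence "card ?C \<noteq> 0" using a by linarith
  hence ne: "?C \<noteq> {}" by (metis card.empty)
  obtain z where z: "z \<in> ?C" "\<forall>w\<in>?C. le w z"
    using chain_max[of ?C] fC ne C chain_sub[of C le ?C] by blast
  have "card ?C \<le> r z" using r_chain[of ?C z] C z chain_sub[of C le ?C] by auto
  moreover have "r z < r x" using r_strict[of z x] z C a by auto
  ultimately have "r z + 1 = r x" using cc by linarith
  moreover have "z \<in> X" "le z x" "z \<noteq> x" using z C by auto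
  ultimately show ?thesis by blast
qed


abbreviation "d \<equiv> rk X (\<lambda>x y. le y x)"
abbreviation "h \<equiv> height X le"

lemma joint:
  assumes "a\<in>X" "b\<in>X" "le b a"
  shows "r b + d a \<le> h + 1" and "b \<noteq> a \<Longrightarrow> r b + d a \<le> h"
proof -
  interpret D: fpo X "\<lambda>x y. le y x" by (rule dual)
  obtain C1 where C1: "C1 \<subseteq> X" "chain_in C1 le" "\<forall>w\<in>C1. le w b" "card C1 = r b" using r_ex by blast
  obtain C2 where C2: "C2 \<subseteq> X" "chain_in C2 le" "\<forall>w\<in>C2. le a w" "card C2 = d a"
  proof -
    obtain C2 where "C2 \<subseteq> X" "chain_in C2 (\<lambda>x y. le y x)" "\<forall>w\<in>C2. le a w" "card C2 = d a"
      using D.r_ex[of a] by blast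
    thus ?thesis using that chain_flip[of C2 le] by simp
  qed
  have f1: "finite C1" "finite C2" using finite_subset[OF C1(1) fin] finite_subset[OF C2(1) fin] by auto
  have x12: "\<forall>c1\<in>C1. \<forall>c2\<in>C2. le c1 c2"
  proof (intro ballI)
    fix c1 c2 assume c: "c1 \<in> C1" "c2 \<in> C2"
    have X: "c1 \<in> X" "c2 \<in> X" using c C1 C2 by auto
    have "le c1 a" using trans[of c1 b a] X c C1 assms by auto
    thus "le c1 c2" using trans[of c1 a c2] X c C2 assms by auto
  qed
  have "chain_in (C1 \<union> C2) le"
    using C1(2) C2(2) x12 unfolding chain_in_def by blast
  hence u: "card (C1 \<union> C2) \<le> h" using height_ge[OF fin] C1 C2 by auto
  have cu: "card C1 + card C2 = card (C1 \<union> C2) + card (C1 \<inter> C2)"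
    using card_Un_Int f1 by blast
  have i: "C1 \<inter> C2 \<subseteq> {a}" and i2: "b \<noteq> a \<Longrightarrow> C1 \<inter> C2 = {}"
  proof -
    { fix z assume z: "z \<in> C1" "z \<in> C2"
      have zX: "z \<in> X" using z C1 by auto
      have "le z b" "le a z" using z C1 C2 by auto
      hence "le a b" using trans[of a z b] zX assms by auto
      hence ab: "a = b" using antisym[of a b] assms by auto
      hence "z = a" using \<open>le z b\<close> \<open>le a z\<close> antisym[of z a] zX assms by auto
      hence "z = a \<and> a = b" using ab by simp }
    thus "C1 \<inter> C2 \<subseteq> {a}" and "b \<noteq> a \<Longrightarrow> C1 \<inter> C2 = {}" by auto
  qed
  have "card (C1 \<inter> C2) \<le> 1" using card_mono[OF _ i] by simp
  thus "r b + d a \<le> h + 1" using cu u C1 C2 by linarith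
  show "b \<noteq> a \<Longrightarrow> r b + d a \<le> h" using cu u C1 C2 i2 by simp
qed

lemma chain_below:
  "\<forall>y. y\<in>X \<longrightarrow> n \<le> r y \<longrightarrow> (\<exists>B. B\<subseteq>X \<and> chain_in B le \<and> card B = n \<and>
     (\<forall>b\<in>B. le b y \<and> r y < r b + n \<and> r y + d y \<le> r b + d b))"
proof (induction n)
  case 0 show ?case by (auto simp: chain_in_def intro!: exI[of _ "{}"])
next
  case (Suc n)
  interpret D: fpo X "\<lambda>x y. le y x" by (rule dual)
  show ?case
  proof (intro allI impI)
    fix y assume y: "y\<in>X" "Suc n \<le> r y"
    show "\<exists>B. B\<subseteq>X \<and> chain_in B le \<and> card B = Suc n \<and>
     (\<forall>b\<in>B. le b y \<and> r y < r b + Suc n \<and> r y + d y \<le> r b + d b)"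
    proof (cases "n = 0")
      case True
      thus ?thesis using y refl by (auto simp: chain_in_def intro!: exI[of _ "{y}"])
    next
      case False
      hence "2 \<le> r y" using y by linarith
      then obtain z where z: "z\<in>X" "le z y" "z \<noteq> y" "r z + 1 = r y" using r_step y(1) by blast
      have dz: "d y < d z" using D.r_strict[of y z] z y by auto
      obtain B where B: "B\<subseteq>X" "chain_in B le" "card B = n"
        "\<forall>b\<in>B. le b z \<and> r z < r b + n \<and> r z + d z \<le> r b + d b"
      proof -
        have "n \<le> r z" using y(2) z(4) by linarith
        from Suc.IH[rule_format, OF z(1) this] show ?thesis using that by blast
      qed
      have yB: "y \<notin> B"
      proof
        assume "y \<in> B" hence "le y z" using B by auto
        thus False using antisym[of y z] z y by auto
      qed
      have "card (insert y B) = Suc n" using yB B finite_subset[OF B(1) fin] by simp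
      moreover have byy: "\<forall>b\<in>B. le b y"
      proof
        fix b assume "b \<in> B" thus "le b y" using trans[of b z y] B z y by auto
      qed
      moreover have "chain_in (insert y B) le"
        using B(2) byy y refl unfolding chain_in_def by auto
      moreover have "\<forall>b\<in>insert y B. le b y \<and> r y < r b + Suc n \<and> r y + d y \<le> r b + d b"
      proof
        fix b assume b: "b \<in> insert y B"
        show "le b y \<and> r y < r b + Suc n \<and> r y + d y \<le> r b + d b"
        proof (cases "b = y")
          case True thus ?thesis using refl y by simp
        next
          case False
          hence bB: "b \<in> B" using b by simp
          have "r z < r b + n" "r z + d z \<le> r b + d b" using B(4) bB by auto
          hence "r y < r b + Suc n" "r y + d y \<le> r b + d b" using z(4) dz by linarith+
          thus ?thesis using byy bB by simp
        qed
      qed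
      moreover have "insert y B \<subseteq> X" using B(1) y(1) by simp
      ultimately show ?thesis by blast
    qed
  qed
qed

lemma tight: "\<forall>n. n < h \<longrightarrow> (\<exists>c\<in>X. r c + d c = h + 1 \<and> r c + n = h)"
proof (intro allI)
  interpret D: fpo X "\<lambda>x y. le y x" by (rule dual)
  fix n show "n < h \<longrightarrow> (\<exists>c\<in>X. r c + d c = h + 1 \<and> r c + n = h)"
  proof (induction n)
    case 0
    show ?case
    proof
      assume h0: "0 < h"
      obtain T where T: "T \<subseteq> X" "chain_in T le" "card T = h" using height_ex[OF fin] by blast
      have fT: "finite T" using T fin finite_subset by auto
      have "T \<noteq> {}" using h0 T by auto
      then obtain t where t: "t \<in> T" "\<forall>w\<in>T. le w t" using chain_max fT T by blast
      have tX: "t \<in> X" using t T by auto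
      have "h \<le> r t" using r_chain[of T t] T t by auto
      moreover have "r t \<le> h" by (rule r_le_h)
      moreover have "1 \<le> d t" using D.r_pos tX by simp
      moreover have "r t + d t \<le> h + 1" using joint(1)[of t t] tX refl by auto
      ultimately show "\<exists>c\<in>X. r c + d c = h + 1 \<and> r c + 0 = h" using tX by (intro bexI[of _ t]) auto
    qed
  next
    case (Suc n)
    show ?case
    proof
      assume a: "Suc n < h"
      then obtain c where c: "c\<in>X" "r c + d c = h + 1" "r c + n = h" using Suc.IH by auto
      hence "2 \<le> r c" using a by linarith
      then obtain z where z: "z\<in>X" "le z c" "z \<noteq> c" "r z + 1 = r c" using r_step c(1) by blast
      have "d c < d z" using D.r_strict[of c z] z c by auto
      moreover have "r z + d z \<le> h + 1" using joint(1)[of z z] z refl by auto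
      ultimately show "\<exists>c\<in>X. r c + d c = h + 1 \<and> r c + Suc n = h" using z c
        by (intro bexI[of _ z]) auto
    qed
  qed
qed


lemma pair_bound:
  assumes ex: "excludes_kk X le k" and k: "1 \<le> k"
    and x: "x\<in>X" and y: "y\<in>X" and nxy: "\<not> le x y" and nyx: "\<not> le y x"
  shows "r y + d x + 1 < h + 2*k"
proof (rule ccontr)
  interpret D: fpo X "\<lambda>x y. le y x" by (rule dual)
  assume "\<not> r y + d x + 1 < h + 2*k"
  hence big: "h + 2*k \<le> r y + d x + 1" by simp
  have ry: "r y \<le> h" by (rule r_le_h)
  have dx: "d x \<le> h" using D.r_le_h[of x] height_flip[of X le] by simp
  have "k \<le> r y" "k \<le> d x" using big ry dx k by linarith+
  obtain B where B: "B\<subseteq>X" "chain_in B le" "card B = k" "\<forall>b\<in>B. le b y \<and> r y < r b + k \<and> r y + d y \<le> r b + d b"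
    using chain_below[rule_format, OF y \<open>k \<le> r y\<close>] by blast
  obtain A where A: "A\<subseteq>X" "chain_in A (\<lambda>x y. le y x)" "card A = k" "\<forall>a\<in>A. le x a \<and> d x < d a + k \<and> d x + r x \<le> d a + r a"
    using D.chain_below[rule_format, OF x \<open>k \<le> d x\<close>] by blast
  note A(2)[unfolded chain_flip[of A le]]
  have inc: "\<forall>b\<in>B. \<forall>a\<in>A. incomparable le b a"
  proof (intro ballI)
    fix b a assume ba: "b\<in>B" "a\<in>A"
    have X: "a\<in>X" "b\<in>X" using ba A B by auto
    have lxa: "le x a" and lby: "le b y" using ba A B by auto
    have n1: "\<not> le a b"
    proof
      assume "le a b"
      hence "le x b" using trans[of x a b] X x lxa by auto
      hence "le x y" using trans[of x b y] X x y lby by auto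
      thus False using nxy by simp
    qed
    have n2: "\<not> le b a"
    proof
      assume lba: "le b a"
      show False
      proof (cases "b = a")
        case True thus False using n1 lba by simp
      next
        case False
        have "r b + d a \<le> h" using joint(2)[OF X(1) X(2) lba False] .
        moreover have "r y < r b + k" "d x < d a + k" using ba A B by auto
        ultimately show False using big by linarith
      qed
    qed
    show "incomparable le b a" using n1 n2 unfolding incomparable_def by simp
  qed
  have "B \<inter> A = {}" using inc refl B unfolding incomparable_def by blast
  thus False using ex B A \<open>chain_in A le\<close> inc unfolding excludes_kk_def by blast
qed

definition Qs :: "nat \<Rightarrow> nat \<Rightarrow> 'a set" where
  "Qs k i = {x\<in>X. d x + i \<le> h + 1 \<and> r x + 3 \<le> i + 2*k}"

lemma Qs_convex: "convex_in X le (Qs k i)"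
proof -
  interpret D: fpo X "\<lambda>x y. le y x" by (rule dual)
  show ?thesis unfolding convex_in_def Qs_def
  proof (intro conjI ballI impI; clarsimp?)
    fix x z y assume a: "x \<in> X" "d x + i \<le> Suc h" "r x + 3 \<le> i + 2 * k"
      "z \<in> X" "d z + i \<le> Suc h" "r z + 3 \<le> i + 2 * k" "y \<in> X" "le x y" "le y z"
    have "d y \<le> d x" using D.r_mono[of y x] a by auto
    moreover have "r y \<le> r z" using r_mono[of y z] a by auto
    ultimately show "d y + i \<le> Suc h \<and> r y + 3 \<le> i + 2 * k" using a by linarith
  qed
qed

lemma Qs_cover:
  assumes ex: "excludes_kk X le k" and k: "2 \<le> k"
    and x: "x\<in>X" and y: "y\<in>X" and nxy: "\<not> le x y" and nyx: "\<not> le y x"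
  shows "\<exists>i\<le>h. x \<in> Qs k i \<and> y \<in> Qs k i"
proof -
  interpret D: fpo X "\<lambda>x y. le y x" by (rule dual)
  have k1: "1 \<le> k" using k by simp
  have gen: "\<exists>i\<le>h. x \<in> Qs k i \<and> y \<in> Qs k i"
    if x: "x\<in>X" and y: "y\<in>X" and nxy: "\<not> le x y" and nyx: "\<not> le y x" and dd: "d y \<le> d x" for x y
  proof -
    have pb: "r y + d x + 1 < h + 2*k" using pair_bound[OF ex k1 x y nxy nyx] by simp
    have jx: "r x + d x \<le> h + 1" using joint(1)[of x x] x refl by auto
    have rx: "1 \<le> r x" using r_pos x by auto
    have dxp: "1 \<le> d x" using D.r_pos x by auto
    define i where "i = h + 1 - d x"
    have i1: "i + d x = h + 1" using i_def jx rx by simp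
    have "i \<le> h" using i1 dxp by linarith
    moreover have "x \<in> Qs k i"
    proof -
      have "d x + i \<le> h + 1" using i1 by linarith
      moreover have "r x + 3 \<le> i + 2*k" using i1 jx k by linarith
      ultimately show ?thesis using x unfolding Qs_def by blast
    qed
    moreover have "y \<in> Qs k i"
    proof -
      have "d y + i \<le> h + 1" using i1 dd by linarith
      moreover have "r y + 3 \<le> i + 2*k" using i1 pb k by linarith
      ultimately show ?thesis using y unfolding Qs_def by blast
    qed
    ultimately show ?thesis by blast
  qed
  show ?thesis
  proof (cases "d y \<le> d x")
    case True thus ?thesis using gen[OF x y nxy nyx] by simp
  next
    case False
    hence "d x \<le> d y" by simp
    from gen[OF y x nyx nxy this] show ?thesis by blast
  qed
qed

lemma Qs_height:
  assumes ex: "excludes_kk X le k" and k: "2 \<le> k"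
  shows "height (Qs k i) le \<le> 4*k - 4"
proof -
  interpret D: fpo X "\<lambda>x y. le y x" by (rule dual)
  have QX: "Qs k i \<subseteq> X" unfolding Qs_def by auto
  have fQ: "finite (Qs k i)" using finite_subset[OF QX fin] .
  show ?thesis
  proof (rule height_le[OF fQ], rule ccontr)
    fix Y assume Y: "Y \<subseteq> Qs k i" "chain_in Y le" "\<not> card Y \<le> 4*k - 4"
    have YX: "Y \<subseteq> X" using Y QX by auto
    have fY: "finite Y" using finite_subset[OF YX fin] .
    let ?Y' = "{y\<in>Y. d y + i + 3*k \<le> h + 5}"
    let ?f = "\<lambda>y. d y + i + 3*k - (h + 6)"
    have injd: "inj_on d Y"
    proof (rule inj_onI, rule ccontr)
      fix a b assume ab: "a \<in> Y" "b \<in> Y" "d a = d b" "a \<noteq> b"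
      have "le a b \<or> le b a" using Y(2) ab unfolding chain_in_def by auto
      thus False using D.r_strict[of a b] D.r_strict[of b a] ab YX by auto
    qed
    have "inj_on ?f (Y - ?Y')"
    proof (rule inj_onI)
      fix a b assume ab: "a \<in> Y - ?Y'" "b \<in> Y - ?Y'" "?f a = ?f b"
      hence "d a = d b" by auto
      thus "a = b" using injd ab by (auto dest: inj_onD)
    qed
    moreover have "?f ` (Y - ?Y') \<subseteq> {..<3*k - 4}"
    proof
      fix v assume "v \<in> ?f ` (Y - ?Y')"
      then obtain y where y: "y \<in> Y" "\<not> d y + i + 3*k \<le> h + 5" "v = ?f y" by auto
      have "d y + i \<le> h + 1" using y Y unfolding Qs_def by auto
      thus "v \<in> {..<3*k - 4}" using y k by auto
    qed
    ultimately have "card (Y - ?Y') \<le> 3*k - 4"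
      using card_inj_on_le[of ?f "Y - ?Y'" "{..<3*k - 4}"] by simp
    moreover have sub: "?Y' \<subseteq> Y" by auto
    moreover have "card (Y - ?Y') = card Y - card ?Y'" using card_Diff_subset[OF finite_subset[OF sub fY] sub] .
    moreover have "card ?Y' \<le> card Y" using card_mono[OF fY sub] .
    ultimately have "k \<le> card ?Y'" using Y(3) k by linarith
    then obtain Y2 where Y2: "Y2 \<subseteq> ?Y'" "card Y2 = k"
      using obtain_subset_with_card_n[OF \<open>k \<le> card ?Y'\<close>] by blast
    have Y2X: "Y2 \<subseteq> X" using Y2 YX by auto
    have chY2: "chain_in Y2 le" using chain_sub[OF Y(2)] Y2 by auto
    have propY: "\<forall>y\<in>Y2. r y + 3 \<le> i + 2*k \<and> d y + i + 3*k \<le> h + 5"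
      using Y2 Y unfolding Qs_def by auto
    have "Y2 \<noteq> {}" using Y2 k by auto
    then obtain y0 where "y0 \<in> Y2" by auto
    have "1 \<le> d y0" using D.r_pos[of y0] Y2X \<open>y0 \<in> Y2\<close> by auto
    hence hb: "i + 3*k \<le> h + 4" using propY \<open>y0 \<in> Y2\<close> by auto
    obtain c where c: "c \<in> X" "r c + d c = h + 1" "r c + (h + 4 - (i + 3*k)) = h"
    proof -
      have "h + 4 - (i + 3*k) < h" using hb k by linarith
      from tight[rule_format, OF this] show ?thesis using that by blast
    qed
    have rc: "r c + 4 = i + 3*k" using c hb by linarith
    have "k \<le> r c" using rc k by linarith
    obtain B where B: "B\<subseteq>X" "chain_in B le" "card B = k"
      "\<forall>b\<in>B. le b c \<and> r c < r b + k \<and> r c + d c \<le> r b + d b"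
      using chain_below[rule_format, OF c(1) \<open>k \<le> r c\<close>] by blast
    have propB: "\<forall>b\<in>B. r b + d b = h + 1 \<and> i + 2*k \<le> r b + 3 \<and> r b + 4 \<le> i + 3*k"
    proof
      fix b assume b: "b \<in> B"
      have bX: "b \<in> X" using b B by auto
      have "r b \<le> r c" using r_mono[of b c] bX c b B by auto
      moreover have "r b + d b \<le> h + 1" using joint(1)[of b b] bX refl by auto
      ultimately show "r b + d b = h + 1 \<and> i + 2*k \<le> r b + 3 \<and> r b + 4 \<le> i + 3*k"
        using b B c rc by auto
    qed
    have inc: "\<forall>y\<in>Y2. \<forall>b\<in>B. incomparable le y b"
    proof (intro ballI)
      fix y b assume yb: "y \<in> Y2" "b \<in> B"
      have X: "y \<in> X" "b \<in> X" using yb Y2X B by auto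
      have py: "r y + 3 \<le> i + 2*k" "d y + i + 3*k \<le> h + 5" using propY yb by auto
      have pb: "r b + d b = h + 1" "i + 2*k \<le> r b + 3" "r b + 4 \<le> i + 3*k" using propB yb by auto
      have ne: "y \<noteq> b"
      proof
        assume "y = b"
        hence "r b + 3 \<le> i + 2*k" "d b + i + 3*k \<le> h + 5" using py by simp_all
        thus False using pb k by linarith
      qed
      have n1: "\<not> le y b"
      proof
        assume "le y b"
        hence "d b < d y" using D.r_strict[of b y] X ne by auto
        thus False using py pb k by linarith
      qed
      have n2: "\<not> le b y"
      proof
        assume "le b y"
        hence "r b < r y" using r_strict[of b y] X ne by auto
        thus False using py pb k by linarith
      qed
      show "incomparable le y b" using n1 n2 unfolding incomparable_def by simp
    qed
    have "Y2 \<inter> B = {}" using inc refl Y2X unfolding incomparable_def by blast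
    hence "\<exists>C D. C \<subseteq> X \<and> D \<subseteq> X \<and> card C = k \<and> card D = k \<and> C \<inter> D = {} \<and>
              chain_in C le \<and> chain_in D le \<and> (\<forall>x\<in>C. \<forall>y\<in>D. incomparable le x y)"
      using Y2X B(1) Y2(2) B(3) chY2 B(2) inc by blast
    thus False using ex unfolding excludes_kk_def by blast
  qed
qed

end

lemma poset_sub: "poset_on X R \<Longrightarrow> A \<subseteq> X \<Longrightarrow> poset_on A R"
  unfolding poset_on_def by blast

lemma minimal_ex:
  assumes f: "finite A" and ne: "A \<noteq> {}" and po: "poset_on A R"
  shows "\<exists>m\<in>A. \<forall>z\<in>A. R z m \<longrightarrow> z = m"
proof -
  obtain a where a: "a \<in> A" using ne by blast
  obtain m where m: "m \<in> A" "\<forall>y. y \<in> A \<longrightarrow> card {z\<in>A. R z m} \<le> card {z\<in>A. R z y}"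
    using ex_has_least_nat[of "\<lambda>x. x \<in> A" a "\<lambda>x. card {z\<in>A. R z x}"] a by blast
  have "\<forall>z\<in>A. R z m \<longrightarrow> z = m"
  proof (intro ballI impI, rule ccontr)
    fix z assume z: "z \<in> A" "R z m" "z \<noteq> m"
    have sub: "{w\<in>A. R w z} \<subseteq> {w\<in>A. R w m}"
    proof
      fix w assume "w \<in> {w\<in>A. R w z}"
      hence "w \<in> A" "R w z" by auto
      thus "w \<in> {w\<in>A. R w m}" using po z m(1) unfolding poset_on_def by blast
    qed
    have "m \<notin> {w\<in>A. R w z}"
    proof
      assume "m \<in> {w\<in>A. R w z}"
      hence "R m z" by simp
      thus False using po z m(1) unfolding poset_on_def by blast
    qed
    moreover have "m \<in> {w\<in>A. R w m}" using m(1) po unfolding poset_on_def by blast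
    ultimately have "{w\<in>A. R w z} \<subset> {w\<in>A. R w m}" using sub by blast
    hence "card {w\<in>A. R w z} < card {w\<in>A. R w m}"
      by (rule psubset_card_mono[rotated]) (use f in simp)
    thus False using m(2) z(1) by (meson not_less)
  qed
  thus ?thesis using m(1) by blast
qed

lemma szpilrajn: "finite A \<Longrightarrow> poset_on A R \<Longrightarrow> \<exists>E. linear_extension A R E"
proof (induction A arbitrary: R rule: finite_remove_induct)
  case empty
  show ?case unfolding linear_extension_def poset_on_def by blast
next
  case (remove A)
  obtain m where m: "m \<in> A" "\<forall>z\<in>A. R z m \<longrightarrow> z = m"
    using minimal_ex[OF remove(1) remove(2) remove.prems] by blast
  have "poset_on (A - {m}) R" using poset_sub[OF remove.prems] by blast
  then obtain E' where E': "linear_extension (A - {m}) R E'" using remove.IH[OF m(1)] by blast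
  define E where "E x y = (x = m \<or> (y \<noteq> m \<and> E' x y))" for x y
  have pE': "poset_on (A - {m}) E'" and tE': "\<forall>x\<in>A-{m}. \<forall>y\<in>A-{m}. E' x y \<or> E' y x"
    and xE': "\<forall>x\<in>A-{m}. \<forall>y\<in>A-{m}. R x y \<longrightarrow> E' x y"
    using E' unfolding linear_extension_def by auto
  have "poset_on A E"
    unfolding poset_on_def
  proof (intro conjI ballI impI)
    fix x assume "x \<in> A" thus "E x x" using pE' unfolding E_def poset_on_def by blast
  next
    fix x y assume xy: "x \<in> A" "y \<in> A" "E x y \<and> E y x"
    thus "x = y" using pE' unfolding E_def poset_on_def by blast
  next
    fix x y z assume xyz: "x \<in> A" "y \<in> A" "z \<in> A" "E x y \<and> E y z"
    show "E x z"
    proof (cases "x = m")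
      case True thus ?thesis unfolding E_def by simp
    next
      case False
      hence "y \<noteq> m" "E' x y" using xyz(4) unfolding E_def by auto
      hence "z \<noteq> m" "E' y z" using xyz(4) unfolding E_def by auto
      have "E' x z" using pE' xyz(1-3) \<open>E' x y\<close> \<open>E' y z\<close> False \<open>y \<noteq> m\<close> \<open>z \<noteq> m\<close>
        unfolding poset_on_def by blast
      thus ?thesis unfolding E_def using \<open>z \<noteq> m\<close> by simp
    qed
  qed
  moreover have "\<forall>x\<in>A. \<forall>y\<in>A. E x y \<or> E y x"
    using tE' unfolding E_def by blast
  moreover have "\<forall>x\<in>A. \<forall>y\<in>A. R x y \<longrightarrow> E x y"
  proof (intro ballI impI)
    fix x y assume xy: "x \<in> A" "y \<in> A" "R x y"
    show "E x y"
    proof (cases "x = m")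
      case True thus ?thesis unfolding E_def by simp
    next
      case False
      hence "y \<noteq> m" using m xy by blast
      thus ?thesis using xE' xy False unfolding E_def by blast
    qed
  qed
  ultimately show ?case unfolding linear_extension_def by blast
qed

lemma extend:
  assumes fX: "finite X" and po: "poset_on X le" and SX: "S \<subseteq> X"
    and pL: "poset_on S L" and lL: "\<forall>x\<in>S. \<forall>y\<in>S. le x y \<longrightarrow> L x y"
  shows "\<exists>E. linear_extension X le E \<and> (\<forall>x\<in>S. \<forall>y\<in>S. L x y \<longrightarrow> E x y)"
proof -
  define R where "R x y = (le x y \<or> (\<exists>a\<in>S. \<exists>b\<in>S. le x a \<and> L a b \<and> le b y))" for x y
  have refl: "\<And>x. x\<in>X \<Longrightarrow> le x x" using po unfolding poset_on_def by blast
  have asym: "\<And>x y. x\<in>X \<Longrightarrow> y\<in>X \<Longrightarrow> le x y \<Longrightarrow> le y x \<Longrightarrow> x = y"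
    using po unfolding poset_on_def by blast
  have tr: "\<And>x y z. x\<in>X \<Longrightarrow> y\<in>X \<Longrightarrow> z\<in>X \<Longrightarrow> le x y \<Longrightarrow> le y z \<Longrightarrow> le x z"
    using po unfolding poset_on_def by blast
  have Lasym: "\<And>x y. x\<in>S \<Longrightarrow> y\<in>S \<Longrightarrow> L x y \<Longrightarrow> L y x \<Longrightarrow> x = y"
    using pL unfolding poset_on_def by blast
  have Ltr: "\<And>x y z. x\<in>S \<Longrightarrow> y\<in>S \<Longrightarrow> z\<in>S \<Longrightarrow> L x y \<Longrightarrow> L y z \<Longrightarrow> L x z"
    using pL unfolding poset_on_def by blast
  have SX': "\<And>a. a \<in> S \<Longrightarrow> a \<in> X" using SX by blast
  have "poset_on X R"
    unfolding poset_on_def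
  proof (intro conjI ballI impI)
    fix x assume "x \<in> X" thus "R x x" unfolding R_def using refl by blast
  next
    fix x y assume xy: "x \<in> X" "y \<in> X" "R x y \<and> R y x"
    hence r1: "R x y" and r2: "R y x" by auto
    show "x = y"
    proof (cases "le x y")
      case lxy: True
      show ?thesis
      proof (cases "le y x")
        case True thus ?thesis using asym xy lxy by blast
      next
        case False
        then obtain a b where ab: "a\<in>S" "b\<in>S" "le y a" "L a b" "le b x" using r2 unfolding R_def by blast
        have "le b a" using tr[of b x a] tr[of x y a] SX' ab xy lxy by blast
        hence "L b a" using lL ab by blast
        hence "a = b" using Lasym ab by blast
        hence "le y x" using tr[of y a x] ab SX' xy by blast
        thus ?thesis using False by blast
      qed
    next
      case nxy: False
      then obtain a b where ab: "a\<in>S" "b\<in>S" "le x a" "L a b" "le b y" using r1 unfolding R_def by blast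
      show ?thesis
      proof (cases "le y x")
        case True
        have "le b a" using tr[of b y x] tr[of b x a] SX' ab xy True by blast
        hence "L b a" using lL ab by blast
        hence "a = b" using Lasym ab by blast
        hence "le x y" using tr[of x a y] ab SX' xy by blast
        thus ?thesis using nxy by blast
      next
        case False
        then obtain a' b' where ab': "a'\<in>S" "b'\<in>S" "le y a'" "L a' b'" "le b' x" using r2 unfolding R_def by blast
        have "le b a'" using tr[of b y a'] SX' ab ab' xy by blast
        hence "L b a'" using lL ab ab' by blast
        have "le b' a" using tr[of b' x a] SX' ab ab' xy by blast
        hence "L b' a" using lL ab ab' by blast
        have "L a a'" using Ltr[of a b a'] ab ab' \<open>L b a'\<close> by blast
        have "L a' a" using Ltr[of a' b' a] ab ab' \<open>L b' a\<close> by blast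
        hence aa: "a = a'" using Lasym ab ab' \<open>L a a'\<close> by blast
        have "L b a" using \<open>L b a'\<close> aa by simp
        hence "a = b" using Lasym ab by blast
        have "L b' a'" using \<open>L b' a\<close> aa by simp
        hence "a' = b'" using Lasym ab' by blast
        have "le x y" using tr[of x a y] ab SX' xy \<open>a = b\<close> by blast
        thus ?thesis using nxy by blast
      qed
    qed
  next
    fix x y z assume xyz: "x \<in> X" "y \<in> X" "z \<in> X" "R x y \<and> R y z"
    hence r1: "R x y" and r2: "R y z" by auto
    show "R x z"
    proof (cases "le x y")
      case lxy: True
      show ?thesis
      proof (cases "le y z")
        case True thus ?thesis using tr xyz lxy unfolding R_def by blast
      next
        case False
        then obtain a b where ab: "a\<in>S" "b\<in>S" "le y a" "L a b" "le b z" using r2 unfolding R_def by blast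
        have "le x a" using tr[of x y a] SX' ab xyz lxy by blast
        thus ?thesis unfolding R_def using ab by blast
      qed
    next
      case nxy: False
      then obtain a b where ab: "a\<in>S" "b\<in>S" "le x a" "L a b" "le b y" using r1 unfolding R_def by blast
      show ?thesis
      proof (cases "le y z")
        case True
        have "le b z" using tr[of b y z] SX' ab xyz True by blast
        thus ?thesis unfolding R_def using ab by blast
      next
        case False
        then obtain a' b' where ab': "a'\<in>S" "b'\<in>S" "le y a'" "L a' b'" "le b' z" using r2 unfolding R_def by blast
        have "le b a'" using tr[of b y a'] SX' ab ab' xyz by blast
        hence "L b a'" using lL ab ab' by blast
        hence "L a a'" using Ltr[of a b a'] ab ab' by blast
        hence "L a b'" using Ltr[of a a' b'] ab ab' by blast
        thus ?thesis unfolding R_def using ab ab' by blast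
      qed
    qed
  qed
  then obtain E where E: "linear_extension X R E" using szpilrajn[OF fX] by blast
  have "linear_extension X le E" using E unfolding linear_extension_def R_def by blast
  moreover have "\<forall>x\<in>S. \<forall>y\<in>S. L x y \<longrightarrow> E x y"
  proof (intro ballI impI)
    fix x y assume xy: "x \<in> S" "y \<in> S" "L x y"
    have "R x y" unfolding R_def using xy refl SX' by blast
    thus "E x y" using E xy SX' unfolding linear_extension_def by blast
  qed
  ultimately show ?thesis by blast
qed

lemma lin_ext_pair:
  assumes fX: "finite X" and po: "poset_on X le" and x: "x \<in> X" and y: "y \<in> X" and nxy: "\<not> le x y"
  shows "\<exists>E. linear_extension X le E \<and> \<not> E x y"
proof -
  have xy: "x \<noteq> y" using nxy po x unfolding poset_on_def by blast
  define L where "L a b = (a = b \<or> (a = y \<and> b = x))" for a b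
  have "poset_on {x, y} L" unfolding poset_on_def L_def using xy by blast
  moreover have "\<forall>a\<in>{x,y}. \<forall>b\<in>{x,y}. le a b \<longrightarrow> L a b" unfolding L_def using nxy by blast
  ultimately obtain E where E: "linear_extension X le E" "\<forall>a\<in>{x,y}. \<forall>b\<in>{x,y}. L a b \<longrightarrow> E a b"
    using extend[OF fX po, of "{x,y}" L] x y by blast
  have "E y x" using E(2) unfolding L_def by blast
  hence "\<not> E x y" using E(1) x y xy unfolding linear_extension_def poset_on_def by blast
  thus ?thesis using E(1) by blast
qed

lemma realizer_ex:
  assumes fQ: "finite Q" and po: "poset_on Q le"
  shows "\<exists>t L. 1 \<le> t \<and> realizer Q le t L"
proof -
  define P where "P = {p. fst p \<in> Q \<and> snd p \<in> Q \<and> \<not> le (fst p) (snd p)}"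
  have fP: "finite P" unfolding P_def
    by (rule finite_subset[of _ "Q \<times> Q"]) (auto simp: fQ)
  have "\<forall>p. \<exists>E. p \<in> P \<longrightarrow> linear_extension Q le E \<and> \<not> E (fst p) (snd p)"
    using lin_ext_pair[OF fQ po] unfolding P_def by blast
  then obtain Ef where Ef: "\<And>p. p \<in> P \<Longrightarrow> linear_extension Q le (Ef p) \<and> \<not> Ef p (fst p) (snd p)"
    by metis
  obtain E0 where E0: "linear_extension Q le E0" using szpilrajn[OF fQ po] by blast
  obtain g where g: "bij_betw g {0..<card P} P" using ex_bij_betw_nat_finite[OF fP] by blast
  define L where "L i = (if i = 0 then E0 else Ef (g (i - 1)))" for i
  have "realizer Q le (card P + 1) L"
    unfolding realizer_def
  proof (intro conjI allI impI ballI iffI)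
    fix i assume i: "i < card P + 1"
    show "linear_extension Q le (L i)"
    proof (cases "i = 0")
      case True thus ?thesis using E0 unfolding L_def by simp
    next
      case False
      hence "g (i - 1) \<in> P" using g i bij_betwE by fastforce
      thus ?thesis using Ef False unfolding L_def by simp
    qed
  next
    fix x y i assume xy: "x \<in> Q" "y \<in> Q" "le x y" and i: "i < card P + 1"
    have "linear_extension Q le (L i)"
    proof (cases "i = 0")
      case True thus ?thesis using E0 unfolding L_def by simp
    next
      case False
      hence "g (i - 1) \<in> P" using g i bij_betwE by fastforce
      thus ?thesis using Ef False unfolding L_def by simp
    qed
    thus "L i x y" using xy unfolding linear_extension_def by blast
  next
    fix x y assume xy: "x \<in> Q" "y \<in> Q" and all: "\<forall>i<card P + 1. L i x y"
    show "le x y"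
    proof (rule ccontr)
      assume n: "\<not> le x y"
      hence "(x, y) \<in> P" unfolding P_def using xy by simp
      then obtain j where j: "j \<in> {0..<card P}" "g j = (x, y)" using g bij_betw_iff_bijections by metis
      have "L (Suc j) x y" using all j by auto
      moreover have "L (Suc j) = Ef (x, y)" unfolding L_def using j by simp
      ultimately show False using Ef[OF \<open>(x, y) \<in> P\<close>] by simp
    qed
  qed
  thus ?thesis by (intro exI[of _ "card P + 1"] exI[of _ L]) simp
qed

lemma dim_props:
  assumes "finite Q" "poset_on Q le"
  shows "1 \<le> dim Q le \<and> (\<exists>L. realizer Q le (dim Q le) L)"
proof -
  obtain t L where "1 \<le> t" "realizer Q le t L" using realizer_ex[OF assms] by blast
  hence "\<exists>t. 1 \<le> t \<and> (\<exists>L. realizer Q le t L)" by blast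
  thus ?thesis unfolding dim_def by (rule LeastI_ex)
qed

lemma dim_le: "1 \<le> t \<Longrightarrow> realizer Q le t L \<Longrightarrow> dim Q le \<le> t"
  unfolding dim_def by (rule Least_le) blast

lemma block:
  assumes fX: "finite X" and po: "poset_on X le" and QX: "Q \<subseteq> X"
    and t: "1 \<le> t" "t \<le> d" and R: "realizer Q le t R"
  shows "\<exists>F. (\<forall>j<d. linear_extension X le (F j)) \<and>
     (\<forall>x\<in>Q. \<forall>y\<in>Q. \<not> le x y \<longrightarrow> (\<exists>j<d. \<not> F j x y))"
proof -
  define M where "M j = R (if j < t then j else 0)" for j
  have Mlin: "linear_extension Q le (M j)" for j
    using R t unfolding M_def realizer_def by auto
  have "\<forall>j. \<exists>E. linear_extension X le E \<and> (\<forall>x\<in>Q. \<forall>y\<in>Q. M j x y \<longrightarrow> E x y)"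
  proof
    fix j
    have "poset_on Q (M j)" "\<forall>x\<in>Q. \<forall>y\<in>Q. le x y \<longrightarrow> M j x y"
      using Mlin[of j] unfolding linear_extension_def by auto
    thus "\<exists>E. linear_extension X le E \<and> (\<forall>x\<in>Q. \<forall>y\<in>Q. M j x y \<longrightarrow> E x y)"
      using extend[OF fX po QX] by blast
  qed
  then obtain F where F: "\<And>j. linear_extension X le (F j)" "\<And>j. \<forall>x\<in>Q. \<forall>y\<in>Q. M j x y \<longrightarrow> F j x y"
    by metis
  have "\<forall>x\<in>Q. \<forall>y\<in>Q. \<not> le x y \<longrightarrow> (\<exists>j<d. \<not> F j x y)"
  proof (intro ballI impI)
    fix x y assume xy: "x \<in> Q" "y \<in> Q" "\<not> le x y"
    then obtain j where j: "j < t" "\<not> R j x y" using R unfolding realizer_def by blast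
    have "M j = R j" unfolding M_def using j by simp
    hence "\<not> F j x y"
    proof -
      have "linear_extension X le (F j)" by (rule F(1))
      have "\<not> M j x y" using j \<open>M j = R j\<close> by simp
      moreover have "F j x y \<Longrightarrow> M j x y"
      proof -
        assume Fxy: "F j x y"
        have "M j x y \<or> M j y x" using Mlin[of j] xy unfolding linear_extension_def by blast
        moreover { assume "M j y x"
          hence "F j y x" using F(2) xy by blast
          have "x \<in> X" "y \<in> X" using xy QX by auto
          hence "x = y" using F(1)[of j] Fxy \<open>F j y x\<close> unfolding linear_extension_def poset_on_def by blast
          hence "M j x y" using Mlin[of j] xy unfolding linear_extension_def poset_on_def by blast }
        ultimately show "M j x y" by blast
      qed
      ultimately show ?thesis by blast
    qed
    thus "\<exists>j<d. \<not> F j x y" using j t by (intro exI[of _ j]) simp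
  qed
  thus ?thesis using F(1) by blast
qed

theorem proposition8:
  fixes X :: "'a set" and le :: "'a \<Rightarrow> 'a \<Rightarrow> bool" and k d1 :: nat
  assumes "k \<ge> 2"
    and "finite X"
    and "poset_on X le"
    and "excludes_kk X le k"
    and "\<forall>Q. convex_in X le Q \<and> height Q le \<le> 4 * k - 4 \<longrightarrow> dim Q le \<le> d1"
  shows "dim X le \<le> (height X le + 1) * d1"
proof -
  interpret fpo X le using assms(2,3) unfolding fpo_def by simp
  have blk: "\<exists>F. (\<forall>j<d1. linear_extension X le (F j)) \<and>
     (\<forall>x\<in>Qs k i. \<forall>y\<in>Qs k i. \<not> le x y \<longrightarrow> (\<exists>j<d1. \<not> F j x y))" for i
  proof -
    have QX: "Qs k i \<subseteq> X" unfolding Qs_def by auto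
    have fQ: "finite (Qs k i)" using finite_subset[OF QX fin] .
    have pQ: "poset_on (Qs k i) le" using poset_sub[OF po QX] .
    have "dim (Qs k i) le \<le> d1" using assms(5) Qs_convex Qs_height[OF assms(4) assms(1)] by blast
    moreover obtain R where "realizer (Qs k i) le (dim (Qs k i) le) R" "1 \<le> dim (Qs k i) le"
      using dim_props[OF fQ pQ] by blast
    ultimately show ?thesis using block[OF fin po QX] by blast
  qed
  have "\<forall>i. \<exists>F. (\<forall>j<d1. linear_extension X le (F j)) \<and>
     (\<forall>x\<in>Qs k i. \<forall>y\<in>Qs k i. \<not> le x y \<longrightarrow> (\<exists>j<d1. \<not> F j x y))" using blk by blast
  then obtain G where G: "\<And>i. \<forall>j<d1. linear_extension X le (G i j)"
    "\<And>i. \<forall>x\<in>Qs k i. \<forall>y\<in>Qs k i. \<not> le x y \<longrightarrow> (\<exists>j<d1. \<not> G i j x y)"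
    by metis
  have d1: "1 \<le> d1"
  proof -
    have QX: "Qs k 0 \<subseteq> X" unfolding Qs_def by auto
    have fQ: "finite (Qs k 0)" using finite_subset[OF QX fin] .
    have pQ: "poset_on (Qs k 0) le" using poset_sub[OF po QX] .
    have "dim (Qs k 0) le \<le> d1" using assms(5) Qs_convex Qs_height[OF assms(4) assms(1)] by blast
    thus ?thesis using dim_props[OF fQ pQ] by linarith
  qed
  define T where "T = (h + 1) * d1"
  define L where "L n = G (n div d1) (n mod d1)" for n
  have T1: "1 \<le> T" unfolding T_def using d1 by simp
  have Llin: "linear_extension X le (L n)" for n
    unfolding L_def using G(1) d1 by simp
  have "realizer X le T L"
    unfolding realizer_def
  proof (intro conjI allI impI ballI iffI)
    fix i assume "i < T" show "linear_extension X le (L i)" by (rule Llin)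
  next
    fix x y i assume "x \<in> X" "y \<in> X" "le x y" "i < T"
    thus "L i x y" using Llin[of i] unfolding linear_extension_def by blast
  next
    fix x y assume xy: "x \<in> X" "y \<in> X" and all: "\<forall>i<T. L i x y"
    show "le x y"
    proof (rule ccontr)
      assume nxy: "\<not> le x y"
      show False
      proof (cases "le y x")
        case True
        have "x \<noteq> y" using nxy refl xy by blast
        have "L 0 x y" using all T1 by simp
        moreover have "L 0 y x" using Llin[of 0] True xy unfolding linear_extension_def by blast
        ultimately show False using Llin[of 0] xy \<open>x \<noteq> y\<close> unfolding linear_extension_def poset_on_def by blast
      next
        case False
        obtain i where i: "i \<le> h" "x \<in> Qs k i" "y \<in> Qs k i"
          using Qs_cover[OF assms(4) assms(1) xy nxy False] by blast
        obtain j where j: "j < d1" "\<not> G i j x y" using G(2)[of i] i nxy by blast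
        define n where "n = i * d1 + j"
        have "n div d1 = i" "n mod d1 = j" unfolding n_def using j by auto
        hence "L n = G i j" unfolding L_def by simp
        moreover have "n < T"
        proof -
          have "n < i * d1 + d1" unfolding n_def using j by simp
          also have "\<dots> = (i + 1) * d1" by simp
          also have "\<dots> \<le> (h + 1) * d1" using i by (intro mult_le_mono1) simp
          finally show ?thesis unfolding T_def .
        qed
        ultimately show False using all j by auto
      qed
    qed
  qed
  hence "dim X le \<le> T" using dim_le T1 by blast
  thus ?thesis unfolding T_def .
qed

end
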